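(* For all non-negative integers $m$ and $n$, $$\sum_{k=1}^nH_k\sum_{j=m}^k\binom{k-1}{j-1}\frac{s(j,m)}{j!}=\frac{1}{m!}H_n(m)H_n-\frac{1}{m!}\sum_{k=1}^n\frac{H_{k-1}(m)}{k}.$$
   Context: For integers $m\ge 1$, $n\ge 0$, the multiple harmonic-like numbers are $H_n(m)=\sum_{1\le k_1+k_2+\cdots+k_m\le n}\frac{1}{k_1k_2\cdots k_m}$ (sum over positive integers $k_1,\dots,k_m$), with $H_n(0)=1$ for $n\ge 0$ and $H_0(m)=0$ for $m\ge1$. $H_n=H_n(1)=\sum_{k=1}^n\frac1k$. The (signed) Stirling numbers of the first kind $s(n,k)$ are defined by $\sum_{n\ge k}s(n,k)\frac{z^n}{n!}=\frac{\ln^k(1+z)}{k!}$, with $s(n,k)=0$ for $n<k$. Binomial coefficients with negative lower index are $0$. *)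

theory Defs
  imports "HOL-Analysis.Harmonic_Numbers" "HOL-Combinatorics.Stirling"
begin

definition stirling1s :: "nat \<Rightarrow> nat \<Rightarrow> real" where
  "stirling1s n k = (-1) ^ (n - k) * real (stirling n k)"

text \<open>Multiple harmonic-like numbers H_n(m): sum over tuples (k_1,...,k_m) of positive
  integers with k_1+...+k_m \<le> n of 1/(k_1...k_m).  For m = 0 the only tuple is empty, giving 1.\<close>
definition mhn :: "nat \<Rightarrow> nat \<Rightarrow> real" where
  "mhn n m = (\<Sum>ks\<in>{ks :: nat list. length ks = m \<and> (\<forall>k\<in>set ks. 1 \<le> k) \<and> sum_list ks \<le> n}.
                 1 / real (prod_list ks))"

text \<open>Binomial coefficient binom(a, b-1) with integer lower index b-1; zero when b = 0.\<close>
definition binom_pred :: "nat \<Rightarrow> nat \<Rightarrow> real" where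
  "binom_pred a b = (if b = 0 then 0 else real (a choose (b - 1)))"

end

theory Submission
  imports Defs "HOL-Computational_Algebra.Formal_Power_Series"
begin

unbundle no vec_syntax
unbundle fps_syntax

definition LS :: "nat \<Rightarrow> nat \<Rightarrow> nat list set" where
  "LS n m = {ks :: nat list. length ks = m \<and> (\<forall>k\<in>set ks. 1 \<le> k) \<and> sum_list ks \<le> n}"

lemma LS_finite: "finite (LS n m)"
proof -
  have "LS n m \<subseteq> {xs. set xs \<subseteq> {0..n} \<and> length xs = m}"
    unfolding LS_def using member_le_sum_list by fastforce
  then show ?thesis using finite_subset finite_lists_length_eq[of "{0..n}" m] by blast
qed

lemma mhn_LS: "mhn n m = (\<Sum>ks\<in>LS n m. 1 / real (prod_list ks))"
  unfolding mhn_def LS_def by simp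

lemma mhn_0: "mhn n 0 = 1"
proof -
  have "LS n 0 = {[]}" unfolding LS_def by auto
  then show ?thesis by (simp add: mhn_LS)
qed

lemma LS_Suc: "LS n (Suc m) = (\<lambda>(i,ks). i # ks) ` (SIGMA i:{1..n}. LS (n - i) m)"
proof (intro equalityI subsetI)
  fix xs assume "xs \<in> LS n (Suc m)"
  then obtain i ks where xs: "xs = i # ks" and "length ks = m" "1 \<le> i" "\<forall>k\<in>set ks. 1 \<le> k"
     "i + sum_list ks \<le> n"
    unfolding LS_def by (cases xs) auto
  then show "xs \<in> (\<lambda>(i,ks). i # ks) ` (SIGMA i:{1..n}. LS (n - i) m)"
    unfolding LS_def by (auto intro!: image_eqI[where x="(i,ks)"])
next
  fix xs assume "xs \<in> (\<lambda>(i,ks). i # ks) ` (SIGMA i:{1..n}. LS (n - i) m)"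
  then show "xs \<in> LS n (Suc m)" unfolding LS_def by auto
qed

lemma mhn_Suc: "mhn n (Suc m) = (\<Sum>i=1..n. mhn (n - i) m / real i)"
proof -
  have inj: "inj_on (\<lambda>(i,ks). i # ks) (SIGMA i:{1..n}. LS (n - i) m)"
    by (auto simp: inj_on_def)
  have "mhn n (Suc m) = (\<Sum>p\<in>(SIGMA i:{1..n}. LS (n - i) m). 1 / real (prod_list (fst p # snd p)))"
    unfolding mhn_LS LS_Suc sum.reindex[OF inj] by (simp add: comp_def split_def)
  also have "\<dots> = (\<Sum>i=1..n. \<Sum>ks\<in>LS (n - i) m. 1 / real (prod_list (i # ks)))"
    by (subst sum.Sigma) (auto simp: LS_finite split_def)
  also have "\<dots> = (\<Sum>i=1..n. mhn (n - i) m / real i)"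
    unfolding mhn_LS by (auto simp: sum_divide_distrib intro!: sum.cong)
  finally show ?thesis .
qed


definition Ff :: "real fps" where "Ff = Abs_fps (\<lambda>i. 1 / of_nat i)"
definition Gf :: "real fps" where "Gf = Abs_fps (\<lambda>_. 1)"

lemma cumul: "(F * Gf) $ n = (\<Sum>i=0..n. F $ i)"
  by (simp add: fps_mult_nth Gf_def)

lemma mhn_fps: "mhn n m = (Ff ^ m * Gf) $ n"
proof (induction m arbitrary: n)
  case 0
  then show ?case by (simp add: mhn_0 Gf_def)
next
  case (Suc m)
  have "(Ff ^ Suc m * Gf) $ n = (Ff * (Ff ^ m * Gf)) $ n" by (simp add: mult.assoc)
  also have "\<dots> = (\<Sum>i=0..n. Ff $ i * (Ff ^ m * Gf) $ (n - i))" by (simp add: fps_mult_nth)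
  also have "\<dots> = (\<Sum>i=1..n. Ff $ i * (Ff ^ m * Gf) $ (n - i))"
    by (simp add: sum.atLeast_Suc_atMost Ff_def)
  also have "\<dots> = (\<Sum>i=1..n. mhn (n - i) m / real i)"
    using Suc by (simp add: Ff_def)
  finally show ?case by (simp add: mhn_Suc)
qed

lemma coeff_diff: "(Ff ^ m) $ (Suc k) = mhn (Suc k) m - mhn k m"
  unfolding mhn_fps cumul by simp

lemma fps_1mX_nth: "((1 - fps_X) * (A :: real fps)) $ n = A $ n - (if n = 0 then 0 else A $ (n - 1))"
  by (simp add: algebra_simps)

lemma deriv_Ff: "fps_deriv Ff = Gf"
  by (simp add: fps_eq_iff Ff_def Gf_def del: of_nat_Suc)

lemma Gf_inv: "(1 - fps_X) * Gf = 1"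
  by (simp add: fps_eq_iff fps_1mX_nth Gf_def del: fps_mult_nth_0)

lemma Ff_rec: "(1 - fps_X) * fps_deriv (fps_const (1 / fact (Suc m)) * Ff ^ Suc m)
    = fps_const (1 / fact m) * Ff ^ m"
proof -
  have "fps_deriv (fps_const (1 / fact (Suc m)) * Ff ^ Suc m)
      = fps_const (1 / fact (Suc m)) * (fps_const (of_nat (Suc m)) * Gf * Ff ^ m)"
    by (simp add: fps_deriv_power deriv_Ff del: power_Suc of_nat_Suc fact_Suc)
  then have "(1 - fps_X) * fps_deriv (fps_const (1 / fact (Suc m)) * Ff ^ Suc m)
      = fps_const (1 / fact (Suc m)) * fps_const (of_nat (Suc m)) * ((1 - fps_X) * Gf) * Ff ^ m"
    by (simp add: algebra_simps del: power_Suc of_nat_Suc fact_Suc)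
  also have "\<dots> = (fps_const (1 / fact (Suc m)) * fps_const (of_nat (Suc m))) * Ff ^ m"
    by (simp add: Gf_inv del: fps_const_mult of_nat_Suc fact_Suc)
  also have "fps_const (1 / fact (Suc m)) * fps_const (of_nat (Suc m)) = (fps_const (1 / fact m) :: real fps)"
  proof -
    have "(1 / fact (Suc m)) * (of_nat (Suc m)) = (1 / fact m :: real)"
      by (simp add: field_simps del: of_nat_Suc)
    then show ?thesis by (simp only: fps_const_mult)
  qed
  finally show ?thesis .
qed


lemma st_rec: "stirling1s (Suc j) (Suc m) = stirling1s j m - real j * stirling1s j (Suc m)"
proof (cases "j < m")
  case True
  then show ?thesis by (simp add: stirling1s_def)
next
  case False
  show ?thesis
  proof (cases "j = m")
    case True
    then show ?thesis by (simp add: stirling1s_def)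
  next
    case False
    with \<open>\<not> j < m\<close> have "j - m = Suc (j - Suc m)" by simp
    then show ?thesis by (simp add: stirling1s_def algebra_simps)
  qed
qed

definition pp :: "nat \<Rightarrow> nat \<Rightarrow> real" where "pp j m = stirling1s j m / fact j"

lemma pp_rec: "real (Suc j) * pp (Suc j) (Suc m) + real j * pp j (Suc m) = pp j m"
proof -
  have "real (Suc j) * pp (Suc j) (Suc m) = stirling1s (Suc j) (Suc m) / fact j"
    by (simp add: pp_def field_simps del: of_nat_Suc)
  moreover have "real j * pp j (Suc m) = real j * stirling1s j (Suc m) / fact j"
    by (simp add: pp_def)
  ultimately show ?thesis by (simp add: st_rec pp_def diff_divide_distrib)
qed

definition qq :: "nat \<Rightarrow> nat \<Rightarrow> real" where
  "qq k m = (if k = 0 then (if m = 0 then 1 else 0)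
             else (\<Sum>j\<le>k. binom_pred (k - 1) j * pp j m))"

lemma binom_term:
  "real (Suc (Suc k)) * binom_pred (Suc k) j - real (Suc k) * binom_pred k j
   = ((if j = 0 then 0 else binom_pred k (j - 1)) + binom_pred k j) * real j"
proof (cases j)
  case 0
  then show ?thesis by (simp add: binom_pred_def)
next
  case (Suc i)
  have pas: "(if i = 0 then 0 else real (k choose (i - 1))) + real (k choose i) = real (Suc k choose i)"
    by (cases i) simp_all
  have abs: "real (Suc k) * real (k choose i) = (real (Suc k) - real i) * real (Suc k choose i)"
  proof (cases "i \<le> Suc k")
    case True
    have "(Suc k - i) * (Suc k choose i) = Suc k * (k choose i)"
      using binomial_absorb_comp[of "Suc k" i] by simp
    then have h: "real (Suc k - i) * real (Suc k choose i) = real (Suc k) * real (k choose i)"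
      by (metis of_nat_mult)
    have e: "real (Suc k - i) = real (Suc k) - real i" by (rule of_nat_diff[OF True])
    show ?thesis using h unfolding e by simp
  next
    case False
    have a: "k choose i = 0" using False by (simp add: binomial_eq_0)
    have b: "Suc k choose i = 0" using False by (simp add: binomial_eq_0)
    show ?thesis by (simp only: a b of_nat_0 mult_zero_right)
  qed
  have "real (Suc (Suc k)) * real (Suc k choose i) =
        real (Suc k) * real (k choose i) + real (Suc i) * real (Suc k choose i)"
    using abs by (simp add: algebra_simps)
  then show ?thesis using Suc pas
    by (simp add: binom_pred_def algebra_simps del: of_nat_Suc)
qed


lemma qq_rec: "real (Suc n) * qq (Suc n) (Suc m) - real n * qq n (Suc m) = qq n m"
proof (cases n)
  case 0
  have "qq (Suc 0) (Suc m) = pp 1 (Suc m)"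
    by (simp add: qq_def binom_pred_def)
  also have "\<dots> = (if m = 0 then 1 else 0)"
    by (cases m) (simp_all add: pp_def stirling1s_def)
  finally show ?thesis using 0 by (simp add: qq_def)
next
  case (Suc k)
  define b where "b = binom_pred"
  define D where "D j = real j * pp j (Suc m)" for j
  define N where "N = Suc (Suc k)"
  have b0: "b k N = 0" by (simp add: b_def binom_pred_def N_def)
  have e1: "qq (Suc n) (Suc m) = (\<Sum>j\<le>N. b (Suc k) j * pp j (Suc m))"
    by (simp add: qq_def Suc b_def N_def)
  have e2: "qq n (Suc m) = (\<Sum>j\<le>N. b k j * pp j (Suc m))"
    by (simp add: qq_def Suc b_def N_def b0[unfolded b_def N_def])
  have "qq n m = (\<Sum>j\<le>Suc k. b k j * pp j m)"
    by (simp add: qq_def Suc b_def)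
  also have "\<dots> = (\<Sum>j\<le>Suc k. b k j * (D (Suc j) + D j))"
    by (simp only: D_def pp_rec)
  also have "\<dots> = (\<Sum>j\<le>Suc k. b k j * D (Suc j)) + (\<Sum>j\<le>Suc k. b k j * D j)"
    by (simp add: algebra_simps sum.distrib)
  also have "(\<Sum>j\<le>Suc k. b k j * D (Suc j)) = (\<Sum>j\<le>N. (if j = 0 then 0 else b k (j - 1)) * D j)"
    unfolding N_def by (subst sum.atMost_Suc_shift) simp
  also have "(\<Sum>j\<le>Suc k. b k j * D j) = (\<Sum>j\<le>N. b k j * D j)"
    unfolding N_def using b0[unfolded N_def] by simp
  finally have e3: "qq n m = (\<Sum>j\<le>N. ((if j = 0 then 0 else b k (j - 1)) + b k j) * real j * pp j (Suc m))"
    by (simp add: D_def algebra_simps sum.distrib)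
  have "real (Suc n) * qq (Suc n) (Suc m) - real n * qq n (Suc m)
      = (\<Sum>j\<le>N. (real (Suc (Suc k)) * b (Suc k) j - real (Suc k) * b k j) * pp j (Suc m))"
    unfolding e1 e2 by (simp add: Suc sum_distrib_left sum_subtractf algebra_simps del: of_nat_Suc)
  also have "\<dots> = qq n m"
    unfolding e3 b_def binom_term by (simp add: algebra_simps)
  finally show ?thesis .
qed


definition Qf :: "nat \<Rightarrow> real fps" where "Qf m = Abs_fps (\<lambda>k. qq k m)"

lemma Qf_rec: "(1 - fps_X) * fps_deriv (Qf (Suc m)) = Qf m"
proof (rule fps_ext)
  fix n
  show "((1 - fps_X) * fps_deriv (Qf (Suc m))) $ n = Qf m $ n"
  proof (cases n)
    case 0
    then show ?thesis using qq_rec[of 0 m] by (simp add: Qf_def fps_1mX_nth del: fps_mult_nth_0)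
  next
    case (Suc k)
    then show ?thesis using qq_rec[of n m]
      by (simp add: Qf_def fps_1mX_nth del: fps_mult_nth_0 of_nat_Suc)
  qed
qed

lemma one_mX_nz: "(1 - fps_X :: real fps) \<noteq> 0"
proof
  assume "(1 - fps_X :: real fps) = 0"
  then have "(1 - fps_X :: real fps) $ 0 = 0" by simp
  then show False by simp
qed

lemma Qf_eq: "Qf m = fps_const (1 / fact m) * Ff ^ m"
proof (induction m)
  case 0
  have "Qf 0 = 1"
  proof (rule fps_ext)
    fix k show "Qf 0 $ k = 1 $ k"
      by (cases k) (auto simp: Qf_def qq_def binom_pred_def pp_def stirling1s_def intro!: sum.neutral)
  qed
  then show ?case by simp
next
  case (Suc m)
  have "(1 - fps_X) * fps_deriv (Qf (Suc m))
      = (1 - fps_X) * fps_deriv (fps_const (1 / fact (Suc m)) * Ff ^ Suc m)"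
    using Qf_rec[of m] Ff_rec[of m] Suc by simp
  then have "fps_deriv (Qf (Suc m)) = fps_deriv (fps_const (1 / fact (Suc m)) * Ff ^ Suc m)"
    using one_mX_nz by simp
  then have eq: "Qf (Suc m) = fps_const (Qf (Suc m) $ 0 - (fps_const (1 / fact (Suc m)) * Ff ^ Suc m) $ 0)
       + fps_const (1 / fact (Suc m)) * Ff ^ Suc m"
    using fps_deriv_eq_iff by blast
  have z1: "Qf (Suc m) $ 0 = 0" by (simp add: Qf_def qq_def)
  have z2: "(fps_const (1 / fact (Suc m)) * Ff ^ Suc m) $ 0 = 0"
    by (simp add: fps_nth_power_0 Ff_def del: power_Suc)
  show ?case using eq unfolding z1 z2 by simp
qed

lemma inner_eq:
  assumes "1 \<le> k"
  shows "(\<Sum>j=m..k. binom_pred (k - 1) j * stirling1s j m / fact j) = (mhn k m - mhn (k - 1) m) / fact m"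
proof -
  have "(\<Sum>j=m..k. binom_pred (k - 1) j * stirling1s j m / fact j) = qq k m"
  proof -
    have "qq k m = (\<Sum>j\<le>k. binom_pred (k - 1) j * stirling1s j m / fact j)"
      using assms unfolding qq_def pp_def by simp
    also have "\<dots> = (\<Sum>j=m..k. binom_pred (k - 1) j * stirling1s j m / fact j)"
      by (rule sum.mono_neutral_cong_right) (auto simp: stirling1s_def)
    finally show ?thesis by simp
  qed
  also have "\<dots> = Qf m $ k" by (simp add: Qf_def)
  also have "\<dots> = (Ff ^ m) $ k / fact m" by (simp add: Qf_eq)
  also have "\<dots> = (mhn k m - mhn (k - 1) m) / fact m"
    using assms coeff_diff[of m "k - 1"] by simp
  finally show ?thesis .
qed

lemma abel:
  fixes M :: "nat \<Rightarrow> real"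
  shows "(\<Sum>k=1..n. harm k * (M k - M (k - 1))) = M n * harm n - (\<Sum>k=1..n. M (k - 1) / real k)"
proof (induction n)
  case 0
  then show ?case by (simp add: harm_def)
next
  case (Suc n)
  then show ?case by (simp add: harm_Suc algebra_simps divide_inverse)
qed

theorem theorem6:
  fixes m n :: nat
  shows "(\<Sum>k=1..n. (harm k :: real) * (\<Sum>j=m..k. binom_pred (k - 1) j * stirling1s j m / fact j))
       = mhn n m * (harm n :: real) / fact m - (\<Sum>k=1..n. mhn (k - 1) m / real k) / fact m"
proof -
  have "(\<Sum>k=1..n. (harm k :: real) * (\<Sum>j=m..k. binom_pred (k - 1) j * stirling1s j m / fact j))
      = (\<Sum>k=1..n. harm k * (mhn k m - mhn (k - 1) m)) / fact m"
    unfolding sum_divide_distrib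
  proof (rule sum.cong)
    fix x assume "x \<in> {1..n}"
    then show "harm x * (\<Sum>j=m..x. binom_pred (x - 1) j * stirling1s j m / fact j)
             = harm x * (mhn x m - mhn (x - 1) m) / fact m"
      using inner_eq[of x m] by simp
  qed simp
  also have "\<dots> = mhn n m * (harm n :: real) / fact m - (\<Sum>k=1..n. mhn (k - 1) m / real k) / fact m"
    unfolding abel[of "\<lambda>k. mhn k m" n] by (simp add: diff_divide_distrib)
  finally show ?thesis .
qed

end
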